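(* Let $\xi=(\tau_L,\delta_L,\tau_R,\delta_R)\in\Phi$. If $J_1(\xi)>1$ then $\phi(g(\xi))<0$.
   Context: Let $\Phi=\{\xi\in\mathbb{R}^4: \tau_L>\delta_L+1,\ \delta_L>0,\ \tau_R<-(\delta_R+1),\ \delta_R>0\}$. For $\xi\in\Phi$, the matrix $\begin{bmatrix}\tau_L&1\\-\delta_L&0\end{bmatrix}$ has real eigenvalues $0<\lambda_L^s<1<\lambda_L^u$ and $\begin{bmatrix}\tau_R&1\\-\delta_R&0\end{bmatrix}$ has real eigenvalues $\lambda_R^u<-1<\lambda_R^s<0$. Define $\phi(\xi)=\delta_R-\left(\tau_R+\delta_L+\delta_R-(1+\tau_R)\lambda_L^u\right)\lambda_L^u$ (with $\lambda_L^u$ computed from the first and second components of $\xi$), $J_1(\xi)=\frac{\lambda_L^u(\lambda_R^u)^2}{\lambda_L^u+|\lambda_R^u|}$, and $g:\Phi\to\Phi$, $g(\xi)=\left(\tau_R^2-2\delta_R,\ \delta_R^2,\ \tau_L\tau_R-\delta_L-\delta_R,\ \delta_L\delta_R\right)$. *)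

theory Defs
  imports Complex_Main
begin

type_synonym param = "real \<times> real \<times> real \<times> real"
  (* (tau_L, delta_L, tau_R, delta_R) *)

definition Phi :: "param set" where
  "Phi = {(tL, dL, tR, dR). tL > dL + 1 \<and> dL > 0 \<and> tR < -(dR + 1) \<and> dR > 0}"

text \<open>Eigenvalues of [[tau,1],[-delta,0]] are the roots of x^2 - tau x + delta = 0.
  The unstable left eigenvalue is the larger root (> 1), the unstable right eigenvalue
  is the smaller (more negative) root (< -1).\<close>
definition lamLu :: "real \<Rightarrow> real \<Rightarrow> real" where
  "lamLu tL dL = (tL + sqrt (tL^2 - 4 * dL)) / 2"

definition lamRu :: "real \<Rightarrow> real \<Rightarrow> real" where
  "lamRu tR dR = (tR - sqrt (tR^2 - 4 * dR)) / 2"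

definition phi :: "param \<Rightarrow> real" where
  "phi xi = (case xi of (tL, dL, tR, dR) \<Rightarrow>
     dR - (tR + dL + dR - (1 + tR) * lamLu tL dL) * lamLu tL dL)"

definition J1 :: "param \<Rightarrow> real" where
  "J1 xi = (case xi of (tL, dL, tR, dR) \<Rightarrow>
     lamLu tL dL * (lamRu tR dR)^2 / (lamLu tL dL + \<bar>lamRu tR dR\<bar>))"

definition g :: "param \<Rightarrow> param" where
  "g xi = (case xi of (tL, dL, tR, dR) \<Rightarrow>
     (tR^2 - 2 * dR, dR^2, tL * tR - dL - dR, dL * dR))"

end

theory Submission
  imports Defs
begin

theorem lemma5p2:
  assumes "xi \<in> Phi" and "J1 xi > 1"
  shows "phi (g xi) < 0"
proof -
  obtain tL dL tR dR where xi: "xi = (tL, dL, tR, dR)" by (cases xi) auto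
  have h: "tL > dL + 1" "dL > 0" "tR < -(dR + 1)" "dR > 0" using assms(1) xi by (auto simp: Phi_def)
  define s where "s = sqrt (tL^2 - 4*dL)"
  define s' where "s' = sqrt (tR^2 - 4*dR)"
  have d1: "tL^2 - 4*dL \<ge> 0"
  proof -
    have "(dL+1)^2 - 4*dL = (dL-1)^2" by (simp add: power2_eq_square algebra_simps)
    then have "(dL+1)^2 \<ge> 4*dL" by (smt (verit) zero_le_power2)
    moreover have "tL^2 \<ge> (dL+1)^2" using h by (intro power_mono) auto
    ultimately show ?thesis by linarith
  qed
  have d2: "tR^2 - 4*dR \<ge> 0"
  proof -
    have "(dR+1)^2 - 4*dR = (dR-1)^2" by (simp add: power2_eq_square algebra_simps)
    then have "(dR+1)^2 \<ge> 4*dR" by (smt (verit) zero_le_power2)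
    moreover have "(-tR)^2 \<ge> (dR+1)^2" using h by (intro power_mono) auto
    ultimately show ?thesis using power2_minus[of tR] by linarith
  qed
  have ss: "s^2 = tL^2 - 4*dL" "s \<ge> 0" using d1 by (auto simp: s_def)
  have ss': "s'^2 = tR^2 - 4*dR" "s' \<ge> 0" using d2 by (auto simp: s'_def)
  define a where "a = lamLu tL dL"
  define c where "c = lamRu tR dR"
  define b where "b = tL - a"
  define d where "d = tR - c"
  have a: "a = (tL + s)/2" by (simp add: a_def lamLu_def s_def)
  have c: "c = (tR - s')/2" by (simp add: c_def lamRu_def s'_def)
  have ab: "a*b = dL" using ss unfolding b_def a by (simp add: power2_eq_square field_simps)
  have cd: "c*d = dR" using ss' unfolding d_def c by (simp add: power2_eq_square field_simps)
  have apos: "a > 0" using a ss h by auto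
  have bpos: "b > 0" proof -
    have "0 < a*b" using ab h by simp
    then show ?thesis using apos by (simp add: zero_less_mult_iff)
  qed
  have cneg: "c < 0" using c ss' h by auto
  have dneg: "d < 0" proof -
    have "0 < c*d" using cd h by simp
    then show ?thesis using cneg by (simp add: zero_less_mult_iff)
  qed
  have cled: "c \<le> d" using c ss' unfolding d_def by auto
  have tL: "tL = a + b" and tR: "tR = c + d" by (auto simp: b_def d_def)
  have J: "a*c^2 / (a + \<bar>c\<bar>) > 1" using assms(2) xi by (simp add: J1_def a_def c_def)
  have J': "a*c^2 > a - c" using J apos cneg by (simp add: field_simps)
  have sq: "sqrt ((c^2 + d^2)^2 - 4*(c^2*d^2)) = c^2 - d^2"
  proof -
    have "(c^2 + d^2)^2 - 4*(c^2*d^2) = (c^2 - d^2)^2" by (simp add: power2_eq_square algebra_simps)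
    moreover have "c^2 - d^2 \<ge> 0" using cled dneg by (smt (verit) power_mono power2_minus)
    ultimately show ?thesis by simp
  qed
  have L: "lamLu (tR^2 - 2*dR) (dR^2) = c^2"
    unfolding lamLu_def tR cd[symmetric]
    using sq by (simp add: power2_eq_square algebra_simps)
  define T where "T = tL*tR - dL - dR"
  have e: "phi (g xi) = (c^2-1)*(T*c^2 - a*b*c*d) + c^4*(1-d^2)"
  proof -
    have "phi (g xi) = dL*dR - (T + dR^2 + dL*dR - (1+T)*c^2)*c^2"
      unfolding xi g_def phi_def using L by (simp add: T_def)
    also have "... = (c^2-1)*(T*c^2 - a*b*c*d) + c^4*(1-d^2)"
      unfolding ab[symmetric] cd[symmetric] by (simp add: power2_eq_square power4_eq_xxxx algebra_simps)
    finally show ?thesis .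
  qed
  have T1: "-T > a*(-c)"
  proof -
    have "a*d<0" "b*c<0" "b*d<0" "a*b>0" "c*d>0" using apos bpos cneg dneg
      by (auto simp: mult_pos_neg mult_neg_neg)
    moreover have "-T = -(a*c) - a*d - b*c - b*d + a*b + c*d"
      unfolding T_def tL tR ab[symmetric] cd[symmetric] by (simp add: algebra_simps)
    ultimately show ?thesis by simp
  qed
  have abcd: "a*b*c*d > 0"
  proof -
    have "a*b > 0" "c*d > 0" using apos bpos cneg dneg by (auto simp: mult_neg_neg)
    then have "(a*b)*(c*d) > 0" by simp
    then show ?thesis by (simp add: mult.assoc)
  qed
  have c21: "c^2 - 1 > 0" proof -
    have "a*1 < a*c^2" using J' cneg by simp
    then show ?thesis using apos by (simp only: mult_less_cancel_left_pos)
  qed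
  have "(c^2-1)*(T*c^2 - a*b*c*d) < (c^2-1)*(T*c^2)"
    using c21 abcd by simp
  also have "(c^2-1)*(T*c^2) < (c^2-1)*(c*a*c^2)"
    using c21 T1 cneg by (intro mult_strict_left_mono) (auto simp: power2_eq_square)
  also have "(c^2-1)*(c*a*c^2) = (a*(c^2-1))*c*c^2" by (simp add: algebra_simps)
  also have "... \<le> (-c)*c*c^2"
    using J' cneg apos by (intro mult_right_mono_neg mult_right_mono) (auto simp: algebra_simps)
  finally have "(c^2-1)*(T*c^2 - a*b*c*d) < - (c^4)" by (simp add: power2_eq_square power4_eq_xxxx)
  moreover have "c^4*(1-d^2) \<le> c^4"
  proof -
    have "c^4*(1-d^2) = c^4 - c^4*d^2" by (simp add: algebra_simps)
    moreover have "c^4*d^2 \<ge> 0" by (simp add: zero_le_even_power)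
    ultimately show ?thesis by linarith
  qed
  ultimately show ?thesis using e by linarith
qed

end
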